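(* Let $\lambda$ and $\lambda'$ be Young diagrams with $n$ boxes such that $\lambda'\ge\lambda$. Then $M_{\lambda',2l}\ge M_{\lambda,2l}$ for every integer $l\ge 0$.
   Context: For a Young diagram $\lambda=(\lambda_1,\dots,\lambda_m)$ with $\lambda_1\ge\dots\ge\lambda_m\ge 1$, $\sum\lambda_i=n$, and an integer $l\ge 0$, define $M_{\lambda,2l}=\sum_{j=1}^m\big\{(\lambda_j-j)^l(\lambda_j-j+1)^l-j^l(j-1)^l\big\}$. For Young diagrams $\lambda,\lambda'$ with $n$ boxes, $\lambda'\ge\lambda$ means that $\lambda'$ can be obtained from $\lambda$ by a finite sequence of moves, each of which removes the last box of some row $b$ and appends it to the end of some row $a<b$, every intermediate shape being a Young diagram (i.e. moving boxes up to the right; the dominance order). *)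

theory Defs
  imports Main
begin

text \<open>A Young diagram is represented by the list of its row lengths
  (lambda_1, ..., lambda_m), nonincreasing, all entries at least 1.\<close>
definition young :: "nat list \<Rightarrow> bool" where
  "young lam \<longleftrightarrow> sorted_wrt (\<ge>) lam \<and> (\<forall>x\<in>set lam. x \<ge> 1)"

definition boxes :: "nat list \<Rightarrow> nat" where
  "boxes lam = sum_list lam"

text \<open>One elementary move (0-based row indices a < b): remove the last box of row b
  and append it to row a; the resulting shape (dropping an emptied row) must be a
  Young diagram, i.e. the row lengths stay nonincreasing with zeros only at the end.\<close>
definition move :: "nat list \<Rightarrow> nat list \<Rightarrow> bool" where
  "move lam mu \<longleftrightarrow> (\<exists>a b. a < b \<and> b < length lam \<and>
     (let nu = lam[a := lam ! a + 1, b := lam ! b - 1] in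
        sorted_wrt (\<ge>) nu \<and> mu = filter (\<lambda>x. x > 0) nu))"

text \<open>lam' \<ge> lam in the dominance order: lam' is reachable from lam by finitely many moves.\<close>
definition dom_ge :: "nat list \<Rightarrow> nat list \<Rightarrow> bool" where
  "dom_ge lam' lam \<longleftrightarrow> move\<^sup>*\<^sup>* lam lam'"

definition M :: "nat list \<Rightarrow> nat \<Rightarrow> int" where
  "M lam l = (\<Sum>j=1..length lam.
      (int (lam ! (j - 1)) - int j) ^ l * (int (lam ! (j - 1)) - int j + 1) ^ l
      - int j ^ l * (int j - 1) ^ l)"

end

theory Submission
  imports Defs
begin

definition ff :: "nat \<Rightarrow> int \<Rightarrow> int" where
  "ff l x = (x * (x + 1)) ^ l"

definition hh :: "nat \<Rightarrow> int \<Rightarrow> int" where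
  "hh l c = ff l c - ff l (c - 1)"

lemma pow_diff_mono:
  fixes u v w :: int
  assumes "0 \<le> u" "u \<le> v" "v \<le> w" "v - u \<le> w - v"
  shows "v ^ l - u ^ l \<le> w ^ l - v ^ l"
proof -
  have e1: "v ^ l - u ^ l = (v - u) * (\<Sum>i<l. u ^ (l - Suc i) * v ^ i)"
    by (rule power_diff_sumr2)
  have e2: "w ^ l - v ^ l = (w - v) * (\<Sum>i<l. v ^ (l - Suc i) * w ^ i)"
    by (rule power_diff_sumr2)
  have s: "(\<Sum>i<l. u ^ (l - Suc i) * v ^ i) \<le> (\<Sum>i<l. v ^ (l - Suc i) * w ^ i)"
  proof (rule sum_mono)
    fix i assume "i \<in> {..<l}"
    show "u ^ (l - Suc i) * v ^ i \<le> v ^ (l - Suc i) * w ^ i"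
      using assms by (intro mult_mono power_mono) auto
  qed
  have s0: "0 \<le> (\<Sum>i<l. u ^ (l - Suc i) * v ^ i)"
    using assms by (intro sum_nonneg) auto
  have "(v - u) * (\<Sum>i<l. u ^ (l - Suc i) * v ^ i) \<le> (w - v) * (\<Sum>i<l. v ^ (l - Suc i) * w ^ i)"
    using assms s s0 by (intro mult_mono) auto
  thus ?thesis using e1 e2 by simp
qed

lemma hh_step_nonneg:
  assumes "0 \<le> c"
  shows "hh l c \<le> hh l (c + 1)"
proof -
  have "(c - 1) * c \<ge> 0"
  proof (cases "c = 0")
    case False with assms have "c \<ge> 1" by simp
    thus ?thesis by simp
  qed simp
  moreover have "(c-1)*c \<le> c*(c+1)" using assms by (simp add: algebra_simps)
  moreover have "c*(c+1) \<le> (c+1)*(c+1+1)" using assms by (simp add: algebra_simps)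
  moreover have "c*(c+1) - (c-1)*c \<le> (c+1)*(c+1+1) - c*(c+1)" by (simp add: algebra_simps)
  ultimately have "(c*(c+1))^l - ((c-1)*c)^l \<le> ((c+1)*(c+1+1))^l - (c*(c+1))^l"
    by (rule pow_diff_mono)
  thus ?thesis unfolding hh_def ff_def by simp
qed

lemma ff_neg: "ff l (- x - 1) = ff l x"
  unfolding ff_def by (simp add: algebra_simps)

lemma hh_odd: "hh l (- c) = - hh l c"
proof -
  have "ff l (- c) = ff l (c - 1)" using ff_neg[of l "c - 1"] by simp
  moreover have "ff l (- c - 1) = ff l c" by (rule ff_neg)
  ultimately show ?thesis unfolding hh_def by simp
qed

lemma hh_step: "hh l c \<le> hh l (c + 1)"
proof (cases "0 \<le> c")
  case True thus ?thesis by (rule hh_step_nonneg)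
next
  case False
  hence "0 \<le> - c - 1" by simp
  hence "hh l (- c - 1) \<le> hh l (- c - 1 + 1)" by (rule hh_step_nonneg)
  moreover have "hh l (- c - 1) = - hh l (c + 1)" using hh_odd[of l "c+1"] by simp
  moreover have "hh l (- c - 1 + 1) = - hh l c" using hh_odd[of l c] by simp
  ultimately show ?thesis by simp
qed

lemma hh_mono:
  assumes "x \<le> y" shows "hh l x \<le> hh l y"
  using assms
proof (induction y rule: int_ge_induct)
  case base thus ?case by simp
next
  case (step i) thus ?case using hh_step[of l i] by simp
qed

definition GG :: "nat \<Rightarrow> nat \<Rightarrow> nat \<Rightarrow> int" where
  "GG l x j = ff l (int x - int j - 1) - ff l (- int j - 1)"

lemma M_term:
  "(int x - int (Suc j)) ^ l * (int x - int (Suc j) + 1) ^ l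
      - int (Suc j) ^ l * (int (Suc j) - 1) ^ l = GG l x j"
proof -
  have a: "(int x - int (Suc j)) ^ l * (int x - int (Suc j) + 1) ^ l = ff l (int x - int j - 1)"
  proof -
    have "(int x - int (Suc j)) * (int x - int (Suc j) + 1) = (int x - int j - 1) * (int x - int j - 1 + 1)"
      by simp
    thus ?thesis unfolding ff_def power_mult_distrib[symmetric] by (rule arg_cong)
  qed
  have b: "int (Suc j) ^ l * (int (Suc j) - 1) ^ l = ff l (- int j - 1)"
  proof -
    have "(- int j - 1) * (- int j - 1 + 1) = int (Suc j) * (int (Suc j) - 1)"
      by (simp add: algebra_simps)
    thus ?thesis unfolding ff_def power_mult_distrib[symmetric] by simp
  qed
  show ?thesis unfolding GG_def a b ..
qed

lemma M_alt: "M lam l = (\<Sum>j<length lam. GG l (lam ! j) j)"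
proof -
  have "M lam l = (\<Sum>j\<in>Suc ` {..<length lam}.
      (int (lam ! (j - 1)) - int j) ^ l * (int (lam ! (j - 1)) - int j + 1) ^ l
      - int j ^ l * (int j - 1) ^ l)" unfolding M_def image_Suc_lessThan ..
  also have "\<dots> = (\<Sum>j<length lam.
      (int (lam ! j) - int (Suc j)) ^ l * (int (lam ! j) - int (Suc j) + 1) ^ l
      - int (Suc j) ^ l * (int (Suc j) - 1) ^ l)"
    by (subst sum.reindex) (auto simp only: inj_on_def comp_def diff_Suc_1 nat.inject)
  also have "\<dots> = (\<Sum>j<length lam. GG l (lam ! j) j)"
    by (simp only: M_term)
  finally show ?thesis .
qed

lemma sum_upd:
  fixes g :: "nat \<Rightarrow> nat \<Rightarrow> int"
  assumes "i < length xs"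
  shows "(\<Sum>j<length xs. g (xs[i := v] ! j) j) = (\<Sum>j<length xs. g (xs ! j) j) + g v i - g (xs ! i) i"
proof -
  have A: "(\<Sum>j<length xs. g (xs[i := v] ! j) j) = g v i + (\<Sum>j\<in>{..<length xs} - {i}. g (xs[i := v] ! j) j)"
    using assms by (subst sum.remove[of _ i]) auto
  have B: "(\<Sum>j<length xs. g (xs ! j) j) = g (xs ! i) i + (\<Sum>j\<in>{..<length xs} - {i}. g (xs ! j) j)"
    using assms by (subst sum.remove[of _ i]) auto
  have C: "(\<Sum>j\<in>{..<length xs} - {i}. g (xs[i := v] ! j) j) = (\<Sum>j\<in>{..<length xs} - {i}. g (xs ! j) j)"
    by (rule sum.cong) auto
  show ?thesis using A B C by simp
qed

lemma M_zeros:
  assumes "\<forall>y\<in>set ys. y = 0"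
  shows "M (xs @ ys) l = M xs l"
proof -
  have "M (xs @ ys) l = (\<Sum>j<length xs + length ys. GG l ((xs @ ys) ! j) j)" by (simp add: M_alt)
  also have "\<dots> = (\<Sum>j<length xs. GG l ((xs @ ys) ! j) j) + (\<Sum>j\<in>{length xs..<length xs + length ys}. GG l ((xs @ ys) ! j) j)"
    unfolding lessThan_atLeast0 by (rule sum.atLeastLessThan_concat[symmetric]) simp_all
  also have "(\<Sum>j\<in>{length xs..<length xs + length ys}. GG l ((xs @ ys) ! j) j) = 0"
  proof (rule sum.neutral, rule ballI)
    fix j assume "j \<in> {length xs..<length xs + length ys}"
    hence "(xs @ ys) ! j = 0" using assms by (auto simp: nth_append)
    thus "GG l ((xs @ ys) ! j) j = 0" by (simp add: GG_def)
  qed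
  finally show ?thesis by (simp add: M_alt nth_append)
qed

lemma sorted_split:
  "sorted_wrt (\<ge>) (xs :: nat list) \<Longrightarrow> xs = filter (\<lambda>x. x > 0) xs @ filter (\<lambda>x. \<not> x > 0) xs"
proof (induction xs)
  case (Cons x xs)
  show ?case
  proof (cases "x > 0")
    case True thus ?thesis using Cons by simp
  next
    case False
    hence "\<forall>y\<in>set xs. y = 0" using Cons.prems by auto
    hence "filter (\<lambda>x. x > 0) xs = []" "filter (\<lambda>x. \<not> x > 0) xs = xs" by (auto simp: filter_empty_conv)
    thus ?thesis using False by simp
  qed
qed simp

lemma move_step:
  assumes "young lam" "move lam mu"
  shows "young mu \<and> M lam l \<le> M mu l"
proof -
  obtain a b where ab: "a < b" "b < length lam"
    and nu: "sorted_wrt (\<ge>) (lam[a := lam ! a + 1, b := lam ! b - 1])"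
    and mu: "mu = filter (\<lambda>x. x > 0) (lam[a := lam ! a + 1, b := lam ! b - 1])"
    using assms(2) unfolding move_def Let_def by blast
  define nu where "nu = lam[a := lam ! a + 1, b := lam ! b - 1]"
  have ym1: "sorted_wrt (\<ge>) mu" unfolding mu using nu by (simp add: sorted_wrt_filter)
  have ym2: "\<forall>x\<in>set mu. x \<ge> 1" unfolding mu by auto
  have ym: "young mu" unfolding young_def using ym1 ym2 by blast
  have lb: "lam ! b \<ge> 1" using assms(1) ab unfolding young_def by auto
  have lab: "lam ! a \<ge> lam ! b" using assms(1) ab unfolding young_def
    by (auto simp: sorted_wrt_iff_nth_less)
  have "M nu l = M (lam[a := lam ! a + 1]) l + GG l (lam ! b - 1) b - GG l ((lam[a := lam ! a + 1]) ! b) b"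
    unfolding M_alt nu_def using ab sum_upd[of b "lam[a := lam ! a + 1]" "GG l" "lam ! b - 1"] by simp
  also have "(lam[a := lam ! a + 1]) ! b = lam ! b" using ab by simp
  also have "M (lam[a := lam ! a + 1]) l = M lam l + GG l (lam ! a + 1) a - GG l (lam ! a) a"
    unfolding M_alt using ab sum_upd[of a lam "GG l" "lam ! a + 1"] by simp
  finally have Mnu: "M nu l = M lam l + (GG l (lam ! a + 1) a - GG l (lam ! a) a) - (GG l (lam ! b) b - GG l (lam ! b - 1) b)"
    by simp
  have g1: "GG l (lam ! a + 1) a - GG l (lam ! a) a = hh l (int (lam ! a) - int a)"
    unfolding GG_def hh_def by simp
  have g2: "GG l (lam ! b) b - GG l (lam ! b - 1) b = hh l (int (lam ! b) - int b - 1)"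
    unfolding GG_def hh_def using lb by (simp add: of_nat_diff algebra_simps)
  have "hh l (int (lam ! b) - int b - 1) \<le> hh l (int (lam ! a) - int a)"
    using lab ab by (intro hh_mono) simp
  hence "M lam l \<le> M nu l" using Mnu g1 g2 by simp
  also have "M nu l = M mu l"
  proof -
    have e: "nu = mu @ filter (\<lambda>x. \<not> x > 0) nu"
      using sorted_split[OF nu] unfolding mu nu_def .
    have z: "\<forall>y\<in>set (filter (\<lambda>x. \<not> x > 0) nu). y = 0" by simp
    show ?thesis using M_zeros[OF z, of mu l] e by simp
  qed
  finally show ?thesis using ym by simp
qed

theorem lemma5p9:
  fixes lam lam' :: "nat list" and n l :: nat
  assumes "young lam" and "young lam'"
    and "boxes lam = n" and "boxes lam' = n"
    and "dom_ge lam' lam"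
  shows "M lam' l \<ge> M lam l"
proof -
  have "move\<^sup>*\<^sup>* lam lam'" using assms(5) unfolding dom_ge_def .
  hence "young lam' \<and> M lam l \<le> M lam' l"
  proof (induction rule: rtranclp_induct)
    case base thus ?case using assms(1) by simp
  next
    case (step y z)
    thus ?case using move_step[of y z l] by auto
  qed
  thus ?thesis by simp
qed

end
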